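(* Let $S$ be a solid and let $x,y\in S^*$. If $R(x)\le R(y)$, then $e(x)y\le e(y)x$.
   Context: A solid is a set $S$ with two binary operations $+$ and $\cdot$ (written $xy$) and a binary relation $\le$ satisfying the following axioms (all variables range over $S$). (A1) $+$ is associative and commutative. (A2) For each $x$ there is $e$ with $x+e=x$ such that $e+f=e$ for every $f$ with $x+f=x$; this $e$ is unique and is denoted $e(x)$ (the magnitude of $x$). An element $x$ with $x=e(x)$ is called a magnitude. (A3) For each $x$ there is $s$ with $x+s=e(x)$ and $e(s)=e(x)$; it is unique and denoted $-x$; write $x-y$ for $x+(-y)$. (A4) $e(x+y)=e(x)$ or $e(x+y)=e(y)$. (M1) $\cdot$ is associative and commutative. (M2) For each $x\neq e(x)$ there is $u$ with $xu=x$ such that $uv=u$ for every $v$ with $xv=x$; it is unique and denoted $u(x)$. (M3) For each $x\ne e(x)$ there is $d$ with $xd=u(x)$ and $u(d)=u(x)$; it is unique and denoted $x^{-1}$; write $y/x$ for $yx^{-1}$. (M4) If $x\neq e(x)$ and $y\ne e(y)$ then $u(xy)=u(x)$ or $u(xy)=u(y)$. (O1) $\le$ is a total order (reflexive, antisymmetric, transitive, total); $x<y$ means $x\le y$ and $x\ne y$. (O2) $x\le y\Rightarrow x+z\le y+z$. (O3) $y+e(x)=e(x)\Rightarrow (y\le e(x)$ and $-y\le e(x))$. (O4) $(e(x)<x$ and $y\le z)\Rightarrow xy\le xz$. (O5) $e(y)\le y\le z\Rightarrow e(x)y\le e(x)z$. (AM1) For all $x,y$ there is $z$ with $e(x)y=e(z)$.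 (AM2) $e(xy)=e(x)y+e(y)x$. (AM3) If $x\ne e(x)$ then $e(u(x))=e(x)/x$. (AM4) (distributivity axiom) $xy+xz=x(y+z)+e(x)y+e(x)z$. (AM5) $-(xy)=(-x)y$. (E1) There is $m$ with $m+x=x$ for all $x$; it is unique, called zero and denoted $0$. (E2) There is $u$ with $ux=x$ for all $x$; it is unique, called one and denoted $1$. (E3) There is $M$ with $e(x)+M=M$ for all $x$. (E4) There is $x$ with $e(x)\ne 0$ and $e(x)\ne M$. (E5) For every $x$ there is $a$ with $x=a+e(x)$ and $e(a)=0$. (E6) If $x,y$ are magnitudes with $x<y$, there is $z$ with $z\ne e(z)$ and $x<z<y$. Further notation: $S^*=\{x\in S: x\ne e(x)\}$ (zeroless elements). $x$ is positive if $e(x)\le x$ and negative if $x<e(x)$; $|x|=x$ if $x$ is positive and $|x|=-x$ if $x$ is negative. $x$ is precise if $e(x)=0$. The relative uncertainty $R(x)$ is $e(u(x))$ if $x\ne e(x)$, and $M$ (from (E3)) if $x=e(x)$. *)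

theory Defs
  imports Main
begin

definition mag :: "('a \<Rightarrow> 'a \<Rightarrow> 'a) \<Rightarrow> 'a \<Rightarrow> 'a" where
  "mag add x = (THE e. add x e = x \<and> (\<forall>f. add x f = x \<longrightarrow> add e f = e))"

definition opp :: "('a \<Rightarrow> 'a \<Rightarrow> 'a) \<Rightarrow> 'a \<Rightarrow> 'a" where
  "opp add x = (THE s. add x s = mag add x \<and> mag add s = mag add x)"

definition unity :: "('a \<Rightarrow> 'a \<Rightarrow> 'a) \<Rightarrow> 'a \<Rightarrow> 'a" where
  "unity mul x = (THE u. mul x u = x \<and> (\<forall>v. mul x v = x \<longrightarrow> mul u v = u))"

definition sinv :: "('a \<Rightarrow> 'a \<Rightarrow> 'a) \<Rightarrow> 'a \<Rightarrow> 'a" where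
  "sinv mul x = (THE d. mul x d = unity mul x \<and> unity mul d = unity mul x)"

definition bigM :: "('a \<Rightarrow> 'a \<Rightarrow> 'a) \<Rightarrow> 'a" where
  "bigM add = (SOME M. \<forall>x. add (mag add x) M = M)"

definition szero :: "('a \<Rightarrow> 'a \<Rightarrow> 'a) \<Rightarrow> 'a" where
  "szero add = (THE m. \<forall>x. add m x = x)"

definition relunc :: "('a \<Rightarrow> 'a \<Rightarrow> 'a) \<Rightarrow> ('a \<Rightarrow> 'a \<Rightarrow> 'a) \<Rightarrow> 'a \<Rightarrow> 'a" where
  "relunc add mul x = (if x \<noteq> mag add x then mag add (unity mul x) else bigM add)"

definition solid :: "('a \<Rightarrow> 'a \<Rightarrow> 'a) \<Rightarrow> ('a \<Rightarrow> 'a \<Rightarrow> 'a) \<Rightarrow> ('a \<Rightarrow> 'a \<Rightarrow> bool) \<Rightarrow> bool" where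
  "solid add mul le \<longleftrightarrow>
    \<comment> \<open>(A1)\<close>
    (\<forall>x y z. add (add x y) z = add x (add y z)) \<and> (\<forall>x y. add x y = add y x) \<and>
    \<comment> \<open>(A2)\<close>
    (\<forall>x. \<exists>e. add x e = x \<and> (\<forall>f. add x f = x \<longrightarrow> add e f = e)) \<and>
    \<comment> \<open>(A3)\<close>
    (\<forall>x. \<exists>!s. add x s = mag add x \<and> mag add s = mag add x) \<and>
    \<comment> \<open>(A4)\<close>
    (\<forall>x y. mag add (add x y) = mag add x \<or> mag add (add x y) = mag add y) \<and>
    \<comment> \<open>(M1)\<close>
    (\<forall>x y z. mul (mul x y) z = mul x (mul y z)) \<and> (\<forall>x y. mul x y = mul y x) \<and>
    \<comment> \<open>(M2)\<close>
    (\<forall>x. x \<noteq> mag add x \<longrightarrow> (\<exists>u. mul x u = x \<and> (\<forall>v. mul x v = x \<longrightarrow> mul u v = u))) \<and>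
    \<comment> \<open>(M3)\<close>
    (\<forall>x. x \<noteq> mag add x \<longrightarrow> (\<exists>!d. mul x d = unity mul x \<and> unity mul d = unity mul x)) \<and>
    \<comment> \<open>(M4)\<close>
    (\<forall>x y. x \<noteq> mag add x \<longrightarrow> y \<noteq> mag add y \<longrightarrow>
        unity mul (mul x y) = unity mul x \<or> unity mul (mul x y) = unity mul y) \<and>
    \<comment> \<open>(O1)\<close>
    (\<forall>x. le x x) \<and> (\<forall>x y. le x y \<longrightarrow> le y x \<longrightarrow> x = y) \<and>
    (\<forall>x y z. le x y \<longrightarrow> le y z \<longrightarrow> le x z) \<and> (\<forall>x y. le x y \<or> le y x) \<and>
    \<comment> \<open>(O2)\<close>
    (\<forall>x y z. le x y \<longrightarrow> le (add x z) (add y z)) \<and>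
    \<comment> \<open>(O3)\<close>
    (\<forall>x y. add y (mag add x) = mag add x \<longrightarrow> le y (mag add x) \<and> le (opp add y) (mag add x)) \<and>
    \<comment> \<open>(O4)\<close>
    (\<forall>x y z. (le (mag add x) x \<and> mag add x \<noteq> x \<and> le y z) \<longrightarrow> le (mul x y) (mul x z)) \<and>
    \<comment> \<open>(O5)\<close>
    (\<forall>x y z. le (mag add y) y \<and> le y z \<longrightarrow> le (mul (mag add x) y) (mul (mag add x) z)) \<and>
    \<comment> \<open>(AM1)\<close>
    (\<forall>x y. \<exists>z. mul (mag add x) y = mag add z) \<and>
    \<comment> \<open>(AM2)\<close>
    (\<forall>x y. mag add (mul x y) = add (mul (mag add x) y) (mul (mag add y) x)) \<and>
    \<comment> \<open>(AM3)\<close>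
    (\<forall>x. x \<noteq> mag add x \<longrightarrow> mag add (unity mul x) = mul (mag add x) (sinv mul x)) \<and>
    \<comment> \<open>(AM4)\<close>
    (\<forall>x y z. add (mul x y) (mul x z) =
        add (add (mul x (add y z)) (mul (mag add x) y)) (mul (mag add x) z)) \<and>
    \<comment> \<open>(AM5)\<close>
    (\<forall>x y. opp add (mul x y) = mul (opp add x) y) \<and>
    \<comment> \<open>(E1)\<close>
    (\<exists>m. \<forall>x. add m x = x) \<and>
    \<comment> \<open>(E2)\<close>
    (\<exists>u. \<forall>x. mul u x = x) \<and>
    \<comment> \<open>(E3)\<close>
    (\<exists>M. \<forall>x. add (mag add x) M = M) \<and>
    \<comment> \<open>(E4)\<close>
    (\<exists>x. mag add x \<noteq> szero add \<and> mag add x \<noteq> bigM add) \<and>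
    \<comment> \<open>(E5)\<close>
    (\<forall>x. \<exists>a. x = add a (mag add x) \<and> mag add a = szero add) \<and>
    \<comment> \<open>(E6)\<close>
    (\<forall>x y. x = mag add x \<longrightarrow> y = mag add y \<longrightarrow> le x y \<longrightarrow> x \<noteq> y \<longrightarrow>
        (\<exists>z. z \<noteq> mag add z \<and> le x z \<and> x \<noteq> z \<and> le z y \<and> z \<noteq> y))"

end

theory Submission
  imports Defs
begin

lemma ax_A2: "solid add mul le \<Longrightarrow> (\<forall>x. \<exists>e. add x e = x \<and> (\<forall>f. add x f = x \<longrightarrow> add e f = e))"
  unfolding solid_def by (elim conjE; assumption)
lemma ax_A3: "solid add mul le \<Longrightarrow> (\<forall>x. \<exists>!s. add x s = mag add x \<and> mag add s = mag add x)"
  unfolding solid_def by (elim conjE; assumption)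
lemma ax_M2: "solid add mul le \<Longrightarrow> (\<forall>x. x \<noteq> mag add x \<longrightarrow> (\<exists>u. mul x u = x \<and> (\<forall>v. mul x v = x \<longrightarrow> mul u v = u)))"
  unfolding solid_def by (elim conjE; assumption)
lemma ax_M3: "solid add mul le \<Longrightarrow> (\<forall>x. x \<noteq> mag add x \<longrightarrow> (\<exists>!d. mul x d = unity mul x \<and> unity mul d = unity mul x))"
  unfolding solid_def by (elim conjE; assumption)
lemma ax_tot: "solid add mul le \<Longrightarrow> (\<forall>x y. le x y \<or> le y x)"
  unfolding solid_def by (elim conjE; assumption)
lemma ax_O2: "solid add mul le \<Longrightarrow> (\<forall>x y z. le x y \<longrightarrow> le (add x z) (add y z))"
  unfolding solid_def by (elim conjE; assumption)
lemma ax_O4: "solid add mul le \<Longrightarrow> (\<forall>x y z. (le (mag add x) x \<and> mag add x \<noteq> x \<and> le y z) \<longrightarrow> le (mul x y) (mul x z))"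
  unfolding solid_def by (elim conjE; assumption)
lemma ax_AM1: "solid add mul le \<Longrightarrow> (\<forall>x y. \<exists>z. mul (mag add x) y = mag add z)"
  unfolding solid_def by (elim conjE; assumption)
lemma ax_AM2: "solid add mul le \<Longrightarrow> (\<forall>x y. mag add (mul x y) = add (mul (mag add x) y) (mul (mag add y) x))"
  unfolding solid_def by (elim conjE; assumption)
lemma ax_AM3: "solid add mul le \<Longrightarrow> (\<forall>x. x \<noteq> mag add x \<longrightarrow> mag add (unity mul x) = mul (mag add x) (sinv mul x))"
  unfolding solid_def by (elim conjE; assumption)
lemma ax_AM5: "solid add mul le \<Longrightarrow> (\<forall>x y. opp add (mul x y) = mul (opp add x) y)"
  unfolding solid_def by (elim conjE; assumption)
lemma ax_A1c: "solid add mul le \<Longrightarrow> (\<forall>x y. add x y = add y x)"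
  unfolding solid_def by (elim conjE; assumption)
lemma ax_M1a: "solid add mul le \<Longrightarrow> (\<forall>x y z. mul (mul x y) z = mul x (mul y z))"
  unfolding solid_def by (elim conjE; assumption)
lemma ax_M1c: "solid add mul le \<Longrightarrow> (\<forall>x y. mul x y = mul y x)"
  unfolding solid_def by (elim conjE; assumption)

lemma s_addc: "solid add mul le \<Longrightarrow> add x y = add y x"
  using ax_A1c by blast
lemma s_mulc: "solid add mul le \<Longrightarrow> mul x y = mul y x"
  using ax_M1c by blast
lemma s_mula: "solid add mul le \<Longrightarrow> mul (mul x y) z = mul x (mul y z)"
  using ax_M1a by blast

lemma mag_prop:
  assumes S: "solid add mul le"
  shows "add x (mag add x) = x \<and> (\<forall>f. add x f = x \<longrightarrow> add (mag add x) f = mag add x)"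
proof -
  have ex: "\<exists>e. add x e = x \<and> (\<forall>f. add x f = x \<longrightarrow> add e f = e)"
    using ax_A2[OF S] by blast
  have "\<exists>!e. add x e = x \<and> (\<forall>f. add x f = x \<longrightarrow> add e f = e)"
  proof -
    obtain e where e: "add x e = x \<and> (\<forall>f. add x f = x \<longrightarrow> add e f = e)" using ex by blast
    show ?thesis
    proof (rule ex1I[of _ e])
      show "add x e = x \<and> (\<forall>f. add x f = x \<longrightarrow> add e f = e)" using e .
      fix e' assume e': "add x e' = x \<and> (\<forall>f. add x f = x \<longrightarrow> add e' f = e')"
      have "add e' e = e'" using e e' by blast
      moreover have "add e e' = e" using e e' by blast
      ultimately show "e' = e" using s_addc[OF S, of e e'] by simp
    qed
  qed
  then show ?thesis unfolding mag_def by (rule theI')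
qed

lemma mag_mag:
  assumes S: "solid add mul le"
  shows "mag add (mag add x) = mag add x" and "add (mag add x) (mag add x) = mag add x"
proof -
  have mm: "add (mag add x) (mag add x) = mag add x" using mag_prop[OF S, of x] by blast
  then show "add (mag add x) (mag add x) = mag add x" .
  have P: "\<And>z. add z (mag add z) = z \<and> (\<forall>f. add z f = z \<longrightarrow> add (mag add z) f = mag add z)"
    using mag_prop[OF S] by blast
  let ?m = "mag add x"
  have a: "add ?m (mag add ?m) = ?m" using P by blast
  have b: "add (mag add ?m) ?m = mag add ?m" using P[of ?m] mm by blast
  show "mag add ?m = ?m" using a b s_addc[OF S, of ?m "mag add ?m"] by simp
qed

lemma opp_prop:
  assumes S: "solid add mul le"
  shows "add x (opp add x) = mag add x \<and> mag add (opp add x) = mag add x"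
proof -
  have "\<exists>!s. add x s = mag add x \<and> mag add s = mag add x"
    using ax_A3[OF S] by blast
  then show ?thesis unfolding opp_def by (rule theI')
qed

lemma opp_mag:
  assumes S: "solid add mul le" and m: "mag add m = m"
  shows "opp add m = m"
proof -
  have u: "\<exists>!s. add m s = mag add m \<and> mag add s = mag add m"
    using ax_A3[OF S] by blast
  have "add m m = mag add m \<and> mag add m = mag add m"
    using mag_mag(2)[OF S, of m] m by simp
  then have "(THE s. add m s = mag add m \<and> mag add s = mag add m) = m"
    by (rule the1_equality[OF u])
  then show ?thesis unfolding opp_def by simp
qed

lemma mag_mul_is_mag:
  assumes S: "solid add mul le"
  shows "mag add (mul (mag add a) b) = mul (mag add a) b"
proof -
  obtain z where "mul (mag add a) b = mag add z" using ax_AM1[OF S] by blast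
  then show ?thesis using mag_mag(1)[OF S, of z] by simp
qed

lemma sign_mag:
  assumes S: "solid add mul le"
  shows "mul (opp add p) (mag add a) = mul p (mag add a)"
proof -
  have "opp add (mul p (mag add a)) = mul (opp add p) (mag add a)"
    using ax_AM5[OF S] by blast
  moreover have "mag add (mul p (mag add a)) = mul p (mag add a)"
    using mag_mul_is_mag[OF S, of a p] s_mulc[OF S, of p "mag add a"] by simp
  ultimately show ?thesis using opp_mag[OF S] by metis
qed

lemma pos_choice:
  assumes S: "solid add mul le" and z: "p \<noteq> mag add p"
  shows "\<exists>q. (q = p \<or> q = opp add p) \<and> le (mag add q) q \<and> mag add q \<noteq> q"
proof (cases "le (mag add p) p")
  case True then show ?thesis using z by metis
next
  case False
  have tot: "le p (mag add p)" using False ax_tot[OF S] by blast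
  have o2: "le (add p (opp add p)) (add (mag add p) (opp add p))"
    using tot ax_O2[OF S] by blast
  have op: "add p (opp add p) = mag add p" "mag add (opp add p) = mag add p"
    using opp_prop[OF S, of p] by auto
  have "add (opp add p) (mag add (opp add p)) = opp add p" using mag_prop[OF S] by blast
  then have e: "add (mag add p) (opp add p) = opp add p" using op s_addc[OF S] by metis
  have l: "le (mag add (opp add p)) (opp add p)" using o2 op e by simp
  have "mag add (opp add p) \<noteq> opp add p"
  proof
    assume h: "mag add (opp add p) = opp add p"
    have "add p (mag add p) = p" using mag_prop[OF S] by blast
    then have "p = mag add p" using op h by simp
    then show False using z by simp
  qed
  then show ?thesis using l by blast
qed

lemma mono_mag:
  assumes S: "solid add mul le" and z: "p \<noteq> mag add p"
    and l: "le (mag add a) (mag add b)"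
  shows "le (mul p (mag add a)) (mul p (mag add b))"
proof -
  obtain q where q: "q = p \<or> q = opp add p" "le (mag add q) q" "mag add q \<noteq> q"
    using pos_choice[OF S z] by blast
  have "le (mul q (mag add a)) (mul q (mag add b))"
    using q(2,3) l ax_O4[OF S] by blast
  then show ?thesis using q(1) sign_mag[OF S] by metis
qed

lemma unity_prop:
  assumes S: "solid add mul le" and z: "x \<noteq> mag add x"
  shows "mul x (unity mul x) = x"
proof -
  have ex: "\<exists>u. mul x u = x \<and> (\<forall>v. mul x v = x \<longrightarrow> mul u v = u)"
    using z ax_M2[OF S] by blast
  have "\<exists>!u. mul x u = x \<and> (\<forall>v. mul x v = x \<longrightarrow> mul u v = u)"
  proof -
    obtain e where e: "mul x e = x \<and> (\<forall>f. mul x f = x \<longrightarrow> mul e f = e)" using ex by blast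
    show ?thesis
    proof (rule ex1I[of _ e])
      show "mul x e = x \<and> (\<forall>f. mul x f = x \<longrightarrow> mul e f = e)" using e .
      fix e' assume e': "mul x e' = x \<and> (\<forall>f. mul x f = x \<longrightarrow> mul e' f = e')"
      have "mul e' e = e'" using e e' by blast
      moreover have "mul e e' = e" using e e' by blast
      ultimately show "e' = e" using s_mulc[OF S, of e e'] by simp
    qed
  qed
  then have "mul x (unity mul x) = x \<and> (\<forall>v. mul x v = x \<longrightarrow> mul (unity mul x) v = unity mul x)"
    unfolding unity_def by (rule theI')
  then show ?thesis by blast
qed

lemma sinv_prop:
  assumes S: "solid add mul le" and z: "x \<noteq> mag add x"
  shows "mul x (sinv mul x) = unity mul x"
proof -
  have "\<exists>!d. mul x d = unity mul x \<and> unity mul d = unity mul x"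
    using z ax_M3[OF S] by blast
  then have "mul x (sinv mul x) = unity mul x \<and> unity mul (sinv mul x) = unity mul x"
    unfolding sinv_def by (rule theI')
  then show ?thesis by blast
qed

lemma key:
  assumes S: "solid add mul le" and z: "x \<noteq> mag add x"
  shows "mul x (relunc add mul x) = mag add x"
proof -
  let ?u = "unity mul x" and ?e = "mag add x" and ?d = "sinv mul x"
  have R: "relunc add mul x = mag add ?u" using z unfolding relunc_def by simp
  have am3: "mag add ?u = mul ?e ?d" using z ax_AM3[OF S] by blast
  have am2: "mag add (mul x ?u) = add (mul ?e ?u) (mul (mag add ?u) x)"
    using ax_AM2[OF S] by blast
  have xu: "mul x ?u = x" using unity_prop[OF S z] .
  have xd: "mul x ?d = ?u" using sinv_prop[OF S z] .
  have "mul (mag add ?u) x = mul ?e ?u"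
    using am3 xd s_mula[OF S] s_mulc[OF S] by metis
  then have eq: "?e = add (mul ?e ?u) (mul ?e ?u)" using am2 xu by simp
  obtain w where w: "mul ?e ?u = mag add w" using ax_AM1[OF S] by blast
  have m: "mul ?e ?u = ?e" using eq w mag_mag(2)[OF S, of w] by simp
  show ?thesis using R am3 xd m s_mula[OF S] s_mulc[OF S] by metis
qed

theorem mainTheorem9:
  fixes add mul :: "'a \<Rightarrow> 'a \<Rightarrow> 'a" and le :: "'a \<Rightarrow> 'a \<Rightarrow> bool" and x y :: 'a
  assumes "solid add mul le"
    and "x \<noteq> mag add x" and "y \<noteq> mag add y"
    and "le (relunc add mul x) (relunc add mul y)"
  shows "le (mul (mag add x) y) (mul (mag add y) x)"
proof -
  note S = assms(1)
  have rx: "relunc add mul x = mag add (unity mul x)" using assms(2) unfolding relunc_def by simp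
  have ry: "relunc add mul y = mag add (unity mul y)" using assms(3) unfolding relunc_def by simp
  have s1: "le (mul x (relunc add mul x)) (mul x (relunc add mul y))"
    using mono_mag[OF S assms(2), of "unity mul x" "unity mul y"] assms(4) rx ry by simp
  have s1': "le (mag add x) (mul x (mag add (unity mul y)))"
    using s1 key[OF S assms(2)] ry by simp
  have mx: "mul x (mag add (unity mul y)) = mag add (mul x (mag add (unity mul y)))"
    using mag_mul_is_mag[OF S, of "unity mul y" x] s_mulc[OF S] by metis
  have s2: "le (mul y (mag add x)) (mul y (mul x (mag add (unity mul y))))"
    using mono_mag[OF S assms(3), of x "mul x (mag add (unity mul y))"] s1' mx by simp
  have "mul y (mul x (mag add (unity mul y))) = mul x (mul y (relunc add mul y))"
    using ry s_mula[OF S] s_mulc[OF S] by metis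
  also have "\<dots> = mul x (mag add y)" using key[OF S assms(3)] by simp
  finally show ?thesis using s2 s_mulc[OF S] by metis
qed

end
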